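(* Let $n,m$ be positive integers and $s$ a real number with $0\le s\le n$. Define $$g(\alpha)=\sum_{i=1}^n\Big(2i\alpha_i+m\big(\alpha_i+1-\tfrac{s}{n}\big)^+\Big)$$ on the polytope $\mathcal{P}=\{\alpha\in\mathbb{R}^n:\ \tfrac{s}{n}\ge\alpha_1\ge\alpha_2\ge\cdots\ge\alpha_n,\ \sum_{i=1}^n\alpha_i=0\}$. If $m\ge 2(\lceil s\rceil-1)$, then $$\min_{\alpha\in\mathcal{P}}g(\alpha)=d^*(s):=-(m+n-2\lfloor s\rfloor-1)s+mn-\lfloor s\rfloor(\lfloor s\rfloor+1).$$
   Context: $(x)^+=\max(0,x)$. The function $d^*$ takes the value $(n-s)(m-s)$ at integers $s$ and is linear in between. *)

theory Defs
  imports Complex_Main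
begin

text \<open>Vectors in R^n are represented as functions nat => real, indexed by 1..n,
  and extensional (zero outside 1..n).\<close>

definition polytopeP :: "nat \<Rightarrow> real \<Rightarrow> (nat \<Rightarrow> real) set" where
  "polytopeP n s = {\<alpha>. (\<forall>i. i \<notin> {1..n} \<longrightarrow> \<alpha> i = 0)
     \<and> (n \<ge> 1 \<longrightarrow> \<alpha> 1 \<le> s / real n)
     \<and> (\<forall>i\<in>{1..<n}. \<alpha> (Suc i) \<le> \<alpha> i)
     \<and> (\<Sum>i=1..n. \<alpha> i) = 0}"

definition gfun :: "nat \<Rightarrow> nat \<Rightarrow> real \<Rightarrow> (nat \<Rightarrow> real) \<Rightarrow> real" where
  "gfun n m s \<alpha> = (\<Sum>i=1..n. 2 * real i * \<alpha> i + real m * max 0 (\<alpha> i + 1 - s / real n))"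

definition dstar_formula :: "nat \<Rightarrow> nat \<Rightarrow> real \<Rightarrow> real" where
  "dstar_formula n m s = - (real m + real n - 2 * of_int \<lfloor>s\<rfloor> - 1) * s + real m * real n
      - of_int \<lfloor>s\<rfloor> * (of_int \<lfloor>s\<rfloor> + 1)"

end

theory Submission
  imports Defs
begin
lemma gauss: "(\<Sum>i=1..n. real i) = real n * (real n + 1) / 2"
  by (induction n) (auto simp: field_simps)
lemma Lsum: assumes "N \<le> n"
  shows "(\<Sum>i=1..n. (if i \<le> N then real i - (real N + 1) else 0)) = - real N * (real N + 1) / 2"
proof -
  have "(\<Sum>i=1..n. (if i \<le> N then real i - (real N + 1) else 0)) = (\<Sum>i\<in>{1..n} \<inter> {i. i \<le> N}. real i - (real N + 1))"
    by (simp add: sum.If_cases)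
  also have "{1..n} \<inter> {i. i \<le> N} = {1..N}" using assms by auto
  also have "(\<Sum>i=1..N. real i - (real N + 1)) = real N * (real N + 1) / 2 - real N * (real N + 1)"
    using gauss[of N] by (simp add: sum_subtractf)
  finally show ?thesis by (simp add: field_simps)
qed
lemma mono1: fixes \<alpha> :: "nat \<Rightarrow> real" assumes "\<forall>i\<in>{1..<n}. \<alpha> (Suc i) \<le> \<alpha> i" shows "i \<in> {1..n} \<Longrightarrow> \<alpha> i \<le> \<alpha> (1::nat)"
proof (induction i)
  case 0 then show ?case by simp
next
  case (Suc j)
  show ?case proof (cases "j = 0")
    case True then show ?thesis by simp
  next
    case False
    then have "j \<in> {1..<n}" using Suc.prems by auto
    then have "\<alpha> (Suc j) \<le> \<alpha> j" using assms by blast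
    moreover have "\<alpha> j \<le> \<alpha> 1" using Suc.IH False Suc.prems by auto
    ultimately show ?thesis by linarith
  qed
qed
lemma split1: fixes h :: "nat \<Rightarrow> real" assumes "N \<le> n"
  shows "sum h {1..n} = sum h {1..N} + sum h {Suc N..n}"
proof -
  have "{1..n} = {1..N} \<union> {Suc N..n}" using assms by auto
  then show ?thesis by (simp add: sum.union_disjoint)
qed

lemma exist:
  fixes n m :: nat and s :: real
  assumes "n > 0" "0 \<le> s" "s \<le> real n"
  shows "\<exists>\<alpha>\<in>polytopeP n s. gfun n m s \<alpha> = dstar_formula n m s"
proof -
  have np: "real n > 0" using assms by simp
  define k where "k = nat \<lfloor>s\<rfloor>"
  have kr: "real k = of_int \<lfloor>s\<rfloor>" using assms(2) k_def by simp
  have "real k \<le> real n" using kr assms(3) by linarith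
  then have kle: "k \<le> n" by simp
  define f where "f = s - real k"
  have S: "s = f + real k" using f_def by simp
  have f0: "0 \<le> f" and f1: "f < 1" using kr f_def by linarith+
  show ?thesis
  proof (cases "k = n")
    case True
    then have S: "s = real n" using kr f_def assms(3) f0 by linarith
    define \<alpha> where "\<alpha> = (\<lambda>i::nat. 0::real)"
    have "\<alpha> \<in> polytopeP n s" unfolding polytopeP_def \<alpha>_def using S np by simp
    moreover have "gfun n m s \<alpha> = dstar_formula n m s"
      unfolding gfun_def dstar_formula_def \<alpha>_def using S np True kr by (simp add: algebra_simps)
    ultimately show ?thesis by blast
  next
    case False
    define N where "N = n - k"
    have N1: "1 \<le> N" "N \<le> n" using False kle N_def by auto
    have Nr: "real N = real n - real k" using kle N_def by simp
    define d where "d i = (if i < N then 0 else if i = N then f else 1)" for i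
    define \<alpha> where "\<alpha> i = (if i \<in> {1..n} then s / real n - d i else 0)" for i
    have d01: "0 \<le> d i" "d i \<le> 1" for i using f0 f1 d_def by auto
    have sumd: "(\<Sum>i=1..n. h i * d i) = h N * f + (\<Sum>i=Suc N..n. h i)" for h :: "nat \<Rightarrow> real"
    proof -
      have "(\<Sum>i=1..n. h i * d i) = (\<Sum>i=1..N. h i * d i) + (\<Sum>i=Suc N..n. h i * d i)"
        using split1 N1 by blast
      also have "(\<Sum>i=1..N. h i * d i) = h N * d N + (\<Sum>i=1..<N. h i * d i)"
        using N1 by (simp add: sum.last_plus)
      also have "(\<Sum>i=1..<N. h i * d i) = 0" by (simp add: d_def)
      also have "(\<Sum>i=Suc N..n. h i * d i) = (\<Sum>i=Suc N..n. h i)"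
        by (rule sum.cong) (auto simp: d_def)
      finally show ?thesis by (simp add: d_def)
    qed
    have g2: "(\<Sum>i=Suc N..n. real i) = real n * (real n + 1) / 2 - real N * (real N + 1) / 2"
      using split1[of N n real] N1 gauss[of n] gauss[of N] by simp
    have g1: "(\<Sum>i=Suc N..n. (1::real)) = real n - real N" using N1 by simp
    have sd: "(\<Sum>i=1..n. d i) = f + real n - real N"
      using sumd[of "\<lambda>_. 1"] g1 by simp
    have sid: "(\<Sum>i=1..n. real i * d i) = real N * f + real n * (real n + 1) / 2 - real N * (real N + 1) / 2"
      using sumd[of real] g2 by simp
    have "\<alpha> \<in> polytopeP n s"
      unfolding polytopeP_def
    proof (intro CollectI conjI allI impI ballI)
      fix i assume "i \<notin> {1..n}" then show "\<alpha> i = 0" unfolding \<alpha>_def by presburger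
    next
      assume "n \<ge> 1" then show "\<alpha> 1 \<le> s / real n" using d01 by (simp add: \<alpha>_def)
    next
      fix i assume "i \<in> {1..<n}"
      then show "\<alpha> (Suc i) \<le> \<alpha> i" using f0 f1 by (auto simp: \<alpha>_def d_def)
    next
      have "(\<Sum>i=1..n. \<alpha> i) = (\<Sum>i=1..n. s / real n - d i)" by (simp add: \<alpha>_def)
      also have "\<dots> = s - (f + real n - real N)" using np sd by (simp add: sum_subtractf)
      finally show "(\<Sum>i=1..n. \<alpha> i) = 0" using Nr f_def by simp
    qed
    moreover have "gfun n m s \<alpha> = dstar_formula n m s"
    proof -
      have "gfun n m s \<alpha> = (\<Sum>i=1..n. 2 * (s / real n) * real i - 2 * (real i * d i) + real m - real m * d i)"
        unfolding gfun_def
      proof (rule sum.cong)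
        fix i assume i: "i \<in> {1..n}"
        have "max 0 (\<alpha> i + 1 - s / real n) = 1 - d i" using i d01[of i] by (simp add: \<alpha>_def)
        then show "2 * real i * \<alpha> i + real m * max 0 (\<alpha> i + 1 - s / real n) =
          2 * (s / real n) * real i - 2 * (real i * d i) + real m - real m * d i"
          using i by (simp add: \<alpha>_def algebra_simps)
      qed simp
      also have "\<dots> = 2 * (s / real n) * (\<Sum>i=1..n. real i) - 2 * (\<Sum>i=1..n. real i * d i) + real m * real n - real m * (\<Sum>i=1..n. d i)"
        by (simp add: sum.distrib sum_subtractf sum_distrib_left)
      also have "\<dots> = dstar_formula n m s"
        unfolding sid sd gauss dstar_formula_def kr[symmetric] Nr using np
        by (simp add: field_simps S)
      finally show ?thesis .
    qed
    ultimately show ?thesis by blast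
  qed
qed

lemma lower:
  fixes n m :: nat and s :: real
  assumes "n > 0" "m > 0" "0 \<le> s" "s \<le> real n"
    and "real m \<ge> 2 * (of_int \<lceil>s\<rceil> - 1)"
    and aP: "\<alpha> \<in> polytopeP n s"
  shows "dstar_formula n m s \<le> gfun n m s \<alpha>"
proof -
  have np: "real n > 0" using assms by simp
  define c where "c = nat \<lceil>s\<rceil>"
  have cs: "real c = of_int \<lceil>s\<rceil>" using assms(3) c_def by simp
  have cle: "c \<le> n" using assms(4) c_def by (simp add: ceiling_le_iff nat_le_iff)
  define N where "N = n - c"
  have Nr: "real N = real n - real c" using cle N_def by simp
  define a where "a = real N + 1"
  define x where "x i = \<alpha> i + 1 - s / real n" for i
  define p where "p i = max 0 (x i)" for i
  have a1: "\<alpha> 1 \<le> s / real n" and amon: "\<forall>i\<in>{1..<n}. \<alpha> (Suc i) \<le> \<alpha> i"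
    and asum: "(\<Sum>i=1..n. \<alpha> i) = 0"
    using aP assms(1) unfolding polytopeP_def by auto
  have xle: "x i \<le> 1" if "i \<in> {1..n}" for i
    using mono1[OF amon that] a1 x_def by simp
  have key: "2*real i*\<alpha> i + real m*max 0 (\<alpha> i + 1 - s/real n) \<ge>
      (2*a + real m - 2*real n) * p i + 2*real n*x i + 2*(if i \<le> N then real i - a else 0)
       - 2*real i*(1 - s/real n)" if i: "i \<in> {1..n}" for i
  proof -
    have h1: "real i * (x i - p i) \<ge> real n * (x i - p i)"
      using i by (intro mult_right_mono_neg) (auto simp: p_def)
    have h2: "(real i - a) * p i \<ge> (if i \<le> N then real i - a else 0)"
    proof (cases "i \<le> N")
      case True
      then have "real i - a \<le> 0" using a_def by simp
      moreover have "p i \<le> 1" using xle[OF i] p_def by simp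
      ultimately have "(real i - a) * p i \<ge> (real i - a) * 1"
        by (intro mult_left_mono_neg) auto
      then show ?thesis using True by simp
    next
      case False
      then have "real i - a \<ge> 0" using a_def by simp
      then show ?thesis using False by (simp add: p_def)
    qed
    have e: "\<alpha> i = x i - 1 + s / real n" using x_def by simp
    show ?thesis unfolding e using h1 h2
      by (simp add: p_def[symmetric] algebra_simps)
  qed
  have "gfun n m s \<alpha> \<ge> (\<Sum>i=1..n. (2*a + real m - 2*real n) * p i + 2*real n*x i + 2*(if i \<le> N then real i - a else 0)
       - 2*real i*(1 - s/real n))"
    unfolding gfun_def by (rule sum_mono) (use key in auto)
  also have "(\<Sum>i=1..n. (2*a + real m - 2*real n) * p i + 2*real n*x i + 2*(if i \<le> N then real i - a else 0)
       - 2*real i*(1 - s/real n)) = (2*a + real m - 2*real n) * (\<Sum>i=1..n. p i) + 2*real n*(\<Sum>i=1..n. x i)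
       + 2*(\<Sum>i=1..n. (if i \<le> N then real i - a else 0)) - 2*(1 - s/real n)*(\<Sum>i=1..n. real i)"
    by (simp add: sum.distrib sum_subtractf sum_distrib_left sum_distrib_right mult.assoc mult.left_commute)
       (simp add: mult.commute)
  finally have G: "gfun n m s \<alpha> \<ge> (2*a + real m - 2*real n) * (\<Sum>i=1..n. p i) + 2*real n*(\<Sum>i=1..n. x i)
       + 2*(\<Sum>i=1..n. (if i \<le> N then real i - a else 0)) - 2*(1 - s/real n)*(\<Sum>i=1..n. real i)" .
  have sx: "(\<Sum>i=1..n. x i) = real n - s"
    using asum np unfolding x_def by (simp add: sum.distrib sum_subtractf)
  have sp: "(\<Sum>i=1..n. p i) \<ge> real n - s"
    unfolding sx[symmetric] by (rule sum_mono) (simp add: p_def)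
  have coef: "2*a + real m - 2*real n \<ge> 0" using assms(5) a_def Nr cs by simp
  have "(2*a + real m - 2*real n) * (\<Sum>i=1..n. p i) \<ge> (2*a + real m - 2*real n) * (real n - s)"
    using coef sp by (rule mult_left_mono[rotated])
  moreover have "(\<Sum>i=1..n. (if i \<le> N then real i - a else 0)) = - real N * (real N + 1) / 2"
    using Lsum[of N n] cle unfolding a_def N_def by simp
  moreover have "2*(1 - s/real n)*(\<Sum>i=1..n. real i) = (real n - s) * (real n + 1)"
    using gauss[of n] np by (simp add: field_simps)
  ultimately have LB: "gfun n m s \<alpha> \<ge> (2*a + real m - 2*real n) * (real n - s) + 2*real n*(real n - s)
      - real N * (real N + 1) - (real n - s) * (real n + 1)"
    using G unfolding sx by linarith
  show ?thesis
  proof (cases "s = of_int \<lfloor>s\<rfloor>")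
    case True
    then have "\<lceil>s\<rceil> = \<lfloor>s\<rfloor>" by (metis ceiling_of_int)
    then have F: "of_int \<lfloor>s\<rfloor> = real c" using cs by simp
    then have S: "s = real c" using True by simp
    have "dstar_formula n m s = (2*a + real m - 2*real n) * (real n - s) + 2*real n*(real n - s)
      - real N * (real N + 1) - (real n - s) * (real n + 1)"
      unfolding dstar_formula_def a_def Nr F S by (simp add: algebra_simps)
    then show ?thesis using LB by linarith
  next
    case False
    then have "\<lceil>s\<rceil> = \<lfloor>s\<rfloor> + 1" by (metis ceiling_altdef)
    then have F: "of_int \<lfloor>s\<rfloor> = real c - 1" using cs by simp
    have "dstar_formula n m s = (2*a + real m - 2*real n) * (real n - s) + 2*real n*(real n - s)
      - real N * (real N + 1) - (real n - s) * (real n + 1)"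
      unfolding dstar_formula_def a_def Nr F by (simp add: algebra_simps)
    then show ?thesis using LB by linarith
  qed
qed
theorem mainTheorem4:
  fixes n m :: nat and s :: real
  assumes "n > 0" "m > 0" "0 \<le> s" "s \<le> real n"
    and "real m \<ge> 2 * (of_int \<lceil>s\<rceil> - 1)"
  shows "(\<exists>\<alpha>\<in>polytopeP n s. gfun n m s \<alpha> = dstar_formula n m s)
       \<and> (\<forall>\<alpha>\<in>polytopeP n s. dstar_formula n m s \<le> gfun n m s \<alpha>)"
  using exist[OF assms(1,3,4)] lower[OF assms] by blast

end
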